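(* Let $b>0$ and let $X_1,X_2,\dots$ be independent random variables such that $\mathbb{E}[X_i]=0$, $\mathbb{E}[|X_i|^2]\le\sigma_i^2$ and $X_i\le b$ (almost surely) for $i\in\mathbb{N}$. Define $S_n=\sum_{i=1}^nX_i$, $\nu_n=\frac1n\sum_{i=1}^n\sigma_i^2$, and \[ \mathcal{V}(s,n)=n\ln\Big[\frac{b^2}{b^2+\nu_n}\exp\Big(-\frac{\nu_n}{b}s\Big)+\frac{\nu_n}{b^2+\nu_n}e^{bs}\Big] \] for $n\in\mathbb{N}$. Let $m$ be a positive integer with $\nu_m>0$. Then for $0<\varepsilon<b$, \[ \Pr\Big\{\sup_{n\in\mathbb{N}}\big[\zeta(S_n-m\varepsilon)-\mathcal{V}(\zeta,n)+\mathcal{V}(\zeta,m)\big]\ge0\Big\}\le\Big[\Big(1+\frac{b\varepsilon}{\nu_m}\Big)^{-\frac{\nu_m+b\varepsilon}{b^2+\nu_m}}\Big(1-\frac{\varepsilon}{b}\Big)^{-\frac{b^2-b\varepsilon}{b^2+\nu_m}}\Big]^m, \] where $\zeta=\frac{b}{b^2+\nu_m}\ln\frac{1+\frac{\varepsilon b}{\nu_m}}{1-\frac{\varepsilon}{b}}$.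
   Context: $\mathbb{N}$ denotes the set of positive integers. *)

theory Defs
  imports "HOL-Probability.Probability"
begin

definition nu :: "(nat \<Rightarrow> real) \<Rightarrow> nat \<Rightarrow> real" where
  "nu \<sigma> n = (\<Sum>i=1..n. (\<sigma> i)\<^sup>2) / real n"

definition VV :: "real \<Rightarrow> (nat \<Rightarrow> real) \<Rightarrow> real \<Rightarrow> nat \<Rightarrow> real" where
  "VV b \<sigma> s n = real n * ln (b\<^sup>2 / (b\<^sup>2 + nu \<sigma> n) * exp (- (nu \<sigma> n / b) * s)
                             + nu \<sigma> n / (b\<^sup>2 + nu \<sigma> n) * exp (b * s))"

end

theory Submission
  imports Defs
begin


lemma exp_quad_lower:
  fixes t :: real assumes "t \<ge> 0" shows "1 + t + t^2/2 \<le> exp t"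
proof -
  have "(\<lambda>x. exp x - 1 - x - x^2/2) 0 \<le> (\<lambda>x. exp x - 1 - x - x^2/2) t"
  proof (rule DERIV_nonneg_imp_nondecreasing[OF assms])
    fix x :: real assume "0 \<le> x" "x \<le> t"
    show "\<exists>y. ((\<lambda>x. exp x - 1 - x - x^2/2) has_real_derivative y) (at x) \<and> 0 \<le> y"
      by (intro exI[of _ "exp x - 1 - x"]) (auto intro!: derivative_eq_intros, use exp_ge_add_one_self[of x] in linarith)
  qed
  then show ?thesis by simp
qed

lemma exp_sinh_lower:
  fixes t :: real assumes "t \<ge> 0" shows "exp t * exp t - 2 * t * exp t - 1 \<ge> 0"
proof -
  have "(\<lambda>x. exp x * exp x - 2 * x * exp x - 1) 0 \<le> (\<lambda>x. exp x * exp x - 2 * x * exp x - 1) t"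
  proof (rule DERIV_nonneg_imp_nondecreasing[OF assms])
    fix x :: real assume "0 \<le> x" "x \<le> t"
    have h: "0 \<le> exp x - 1 - x" using exp_ge_add_one_self[of x] by linarith
    have "0 \<le> 2 * exp x * (exp x - 1 - x)" using h by simp
    then show "\<exists>y. ((\<lambda>x. exp x * exp x - 2 * x * exp x - 1) has_real_derivative y) (at x) \<and> 0 \<le> y"
      by (intro exI[of _ "2 * exp x * (exp x - 1 - x)"]) (auto intro!: derivative_eq_intros simp: algebra_simps)
  qed
  then show ?thesis by simp
qed

lemma exp_quad_upper_neg:
  fixes w :: real assumes "w \<le> 0" shows "exp w \<le> 1 + w + w^2/2"
proof -
  have "(\<lambda>x. 1 + x + x^2/2 - exp x) 0 \<le> (\<lambda>x. 1 + x + x^2/2 - exp x) w"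
  proof (rule deriv_nonpos_imp_antimono[OF _ _ assms])
    fix x :: real assume "x \<in> {w..0}"
    show "((\<lambda>x. 1 + x + x^2/2 - exp x) has_real_derivative (1 + x - exp x)) (at x)"
      by (auto intro!: derivative_eq_intros)
    show "1 + x - exp x \<le> 0" using exp_ge_add_one_self[of x] by simp
  qed
  then show ?thesis by simp
qed

lemma aux_M:
  fixes w :: real assumes "w \<ge> 0" shows "(w - 1) * exp w + 1 \<ge> 0"
proof -
  have "(\<lambda>x. (x - 1) * exp x + 1) 0 \<le> (\<lambda>x. (x - 1) * exp x + 1) w"
  proof (rule DERIV_nonneg_imp_nondecreasing[OF assms])
    fix x :: real assume "0 \<le> x" "x \<le> w"
    then show "\<exists>y. ((\<lambda>x. (x - 1) * exp x + 1) has_real_derivative y) (at x) \<and> 0 \<le> y"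
      by (intro exI[of _ "x * exp x"]) (auto intro!: derivative_eq_intros simp: algebra_simps)
  qed
  then show ?thesis by simp
qed

lemma aux_N:
  fixes w :: real assumes "w \<ge> 0" shows "(w - 2) * exp w + w + 2 \<ge> 0"
proof -
  have "(\<lambda>x. (x - 2) * exp x + x + 2) 0 \<le> (\<lambda>x. (x - 2) * exp x + x + 2) w"
  proof (rule DERIV_nonneg_imp_nondecreasing[OF assms])
    fix x :: real assume "0 \<le> x" "x \<le> w"
    then show "\<exists>y. ((\<lambda>x. (x - 2) * exp x + x + 2) has_real_derivative y) (at x) \<and> 0 \<le> y"
      using aux_M[of x]
      by (intro exI[of _ "(x - 1) * exp x + 1"]) (auto intro!: derivative_eq_intros simp: algebra_simps)
  qed
  then show ?thesis by simp
qed

lemma g_mono: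
  fixes w D :: real assumes "0 < w" "w \<le> D"
  shows "(exp w - 1 - w) / w^2 \<le> (exp D - 1 - D) / D^2"
proof -
  show ?thesis
  proof (rule DERIV_nonneg_imp_nondecreasing[OF assms(2), where f = "\<lambda>x. (exp x - 1 - x) / x^2"])
    fix x :: real assume x: "w \<le> x" "x \<le> D"
    then have xp: "x > 0" using assms by simp
    have d: "((\<lambda>x. (exp x - 1 - x) / x^2) has_real_derivative
       ((exp x - 1) * x^2 - (exp x - 1 - x) * (2 * x)) / (x^2)^2) (at x)"
      using xp by (auto intro!: derivative_eq_intros simp: power2_eq_square)
    have e: "((exp x - 1) * x^2 - (exp x - 1 - x) * (2 * x)) / (x^2)^2 = ((x - 2) * exp x + x + 2) / x^3"
      using xp by (simp add: field_simps power2_eq_square power3_eq_cube)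
    have "0 \<le> ((x - 2) * exp x + x + 2) / x^3" using aux_N[of x] xp by simp
    then show "\<exists>y. ((\<lambda>x. (exp x - 1 - x) / x^2) has_real_derivative y) (at x) \<and> 0 \<le> y"
      using d e by auto
  qed
qed

lemma bennett_pt:
  fixes w D :: real assumes "0 < D" "w \<le> D"
  shows "exp w \<le> 1 + w + w^2 * ((exp D - 1 - D) / D^2)"
proof (cases "w > 0")
  case True
  have "(exp w - 1 - w) / w^2 \<le> (exp D - 1 - D) / D^2" using g_mono True assms by blast
  then have "(exp w - 1 - w) \<le> w^2 * ((exp D - 1 - D) / D^2)" using True
    by (simp add: divide_le_eq mult.commute)
  then show ?thesis by simp
next
  case False
  then have w: "w \<le> 0" by simp
  have "1/2 \<le> (exp D - 1 - D) / D^2" using exp_quad_lower[of D] assms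
    by (simp add: field_simps)
  then have "w^2 / 2 \<le> w^2 * ((exp D - 1 - D) / D^2)"
    by (metis mult.commute mult_left_mono times_divide_eq_left zero_le_power2 mult_1)
  then show ?thesis using exp_quad_upper_neg[OF w] by linarith
qed



lemma bennett_quad:
  fixes b v s x :: real
  assumes b: "b > 0" and v: "v \<ge> 0" and s: "s > 0" and x: "x \<le> b"
  defines "a \<equiv> v / b"
  defines "K \<equiv> (exp (s * (a + b)) - 1 - s * (a + b)) / (s * (a + b))^2"
  shows "exp (s * x) \<le> exp (- s * a) * ((1 + s * a + s^2 * K * a^2) + (s + 2 * s^2 * K * a) * x + s^2 * K * x^2)"
proof -
  have a: "a \<ge> 0" using b v by (simp add: a_def)
  have D: "0 < s * (a + b)" using a b s by simp
  have w: "s * (x + a) \<le> s * (a + b)" using x s by simp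
  have "exp (s * (x + a)) \<le> 1 + s * (x + a) + (s * (x + a))^2 * K"
    using bennett_pt[OF D w] unfolding K_def by simp
  moreover have eq: "exp (- s * a) * exp (s * (x + a)) = exp (s * x)"
  proof -
    have "exp (- s * a) * exp (s * (x + a)) = exp (- s * a + s * (x + a))" by (rule mult_exp_exp)
    also have "- s * a + s * (x + a) = s * x" by algebra
    finally show ?thesis .
  qed
  moreover have "1 + s * (x + a) + (s * (x + a))^2 * K = (1 + s * a + s^2 * K * a^2) + (s + 2 * s^2 * K * a) * x + s^2 * K * x^2"
    by (simp add: power2_eq_square algebra_simps)
  ultimately have h: "exp (s * (x + a)) \<le> (1 + s * a + s^2 * K * a^2) + (s + 2 * s^2 * K * a) * x + s^2 * K * x^2"
    by linarith
  have "exp (- s * a) * exp (s * (x + a)) \<le> exp (- s * a) * ((1 + s * a + s^2 * K * a^2) + (s + 2 * s^2 * K * a) * x + s^2 * K * x^2)"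
    by (rule mult_left_mono[OF h]) simp
  from this show ?thesis unfolding eq .
qed

lemma bennett_K_nonneg:
  fixes D :: real assumes "D > 0" shows "(exp D - 1 - D) / D^2 \<ge> 0"
  using exp_ge_add_one_self[of D] by (intro divide_nonneg_nonneg) (linarith, simp)

lemma bennett_value:
  fixes b v s :: real
  assumes b: "b > 0" and v: "v \<ge> 0" and s: "s > 0"
  defines "a \<equiv> v / b"
  defines "K \<equiv> (exp (s * (a + b)) - 1 - s * (a + b)) / (s * (a + b))^2"
  shows "exp (- s * a) * ((1 + s * a + s^2 * K * a^2) + s^2 * K * v)
     = b\<^sup>2 / (b\<^sup>2 + v) * exp (- (v / b) * s) + v / (b\<^sup>2 + v) * exp (b * s)"
proof -
  have a: "a \<ge> 0" using b v by (simp add: a_def)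
  have ab: "a + b > 0" using a b by simp
  have e1: "s^2 * K * (a^2 + v) = a * (exp (s * (a + b)) - 1 - s * (a + b)) / (a + b)"
  proof -
    define E where "E = exp (s * (a + b)) - 1 - s * (a + b)"
    have "a^2 + v = a * (a + b)" using b by (simp add: a_def power2_eq_square field_simps)
    moreover have "s^2 * K = E / (a + b)^2" using s ab
      unfolding K_def E_def[symmetric] by (simp add: power_mult_distrib)
    ultimately have "s^2 * K * (a^2 + v) = E / (a + b)^2 * (a * (a + b))" by simp
    also have "\<dots> = (a * E) * (a + b) / ((a + b) * (a + b))" by (simp add: power2_eq_square)
    also have "\<dots> = a * E / (a + b)" using ab by simp
    finally show ?thesis unfolding E_def .
  qed
  have "exp (- s * a) * ((1 + s * a + s^2 * K * a^2) + s^2 * K * v)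
      = exp (- s * a) * (1 + s * a + a * (exp (s * (a + b)) - 1 - s * (a + b)) / (a + b))"
    using e1 by (simp add: algebra_simps)
  also have "\<dots> = exp (- s * a) * (b / (a + b)) + (a / (a + b)) * (exp (- s * a) * exp (s * (a + b)))"
  proof -
    have gen: "u * (1 + s * a + a * (w - 1 - s * (a + b)) / (a + b)) = u * (b / (a + b)) + (a / (a + b)) * (u * w)"
      for u w :: real
    proof -
      have "1 + s * a + a * (w - 1 - s * (a + b)) / (a + b) = (b + a * w) / (a + b)"
        using ab by (simp add: field_simps)
      then show ?thesis by (simp add: add_divide_distrib algebra_simps)
    qed
    show ?thesis by (rule gen)
  qed
  also have "exp (- s * a) * exp (s * (a + b)) = exp (b * s)"
  proof -
    have "exp (- s * a) * exp (s * (a + b)) = exp (- s * a + s * (a + b))" by (rule mult_exp_exp)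
    also have "- s * a + s * (a + b) = b * s" by algebra
    finally show ?thesis .
  qed
  also have "b / (a + b) = b\<^sup>2 / (b\<^sup>2 + v)" using b by (simp add: a_def field_simps power2_eq_square)
  also have "a / (a + b) = v / (b\<^sup>2 + v)" using b by (simp add: a_def field_simps power2_eq_square)
  finally have F: "exp (- s * a) * (1 + s * a + s\<^sup>2 * K * a\<^sup>2 + s\<^sup>2 * K * v) =
    exp (- s * a) * (b\<^sup>2 / (b\<^sup>2 + v)) + v / (b\<^sup>2 + v) * exp (b * s)" .
  have "exp (- s * a) = exp (- (v / b) * s)" by (simp add: a_def)
  then show ?thesis using F by (simp add: mult.commute)
qed

lemma mgf_bound:
  fixes M :: "'a measure" and X :: "'a \<Rightarrow> real" and b v s :: real
  assumes P: "prob_space M" and b: "b > 0" and s: "s > 0" and v: "v \<ge> 0"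
    and Xm: "X \<in> borel_measurable M" and Xi: "integrable M X"
    and E0: "prob_space.expectation M X = 0"
    and V: "(\<integral>\<^sup>+ x. ennreal (\<bar>X x\<bar>\<^sup>2) \<partial>M) \<le> ennreal v"
    and bd: "AE x in M. X x \<le> b"
  shows "(\<integral>\<^sup>+ x. ennreal (exp (s * X x)) \<partial>M)
     \<le> ennreal (b\<^sup>2 / (b\<^sup>2 + v) * exp (- (v / b) * s) + v / (b\<^sup>2 + v) * exp (b * s))"
proof -
  interpret prob_space M by (rule P)
  define a where "a = v / b"
  define K where "K = (exp (s * (a + b)) - 1 - s * (a + b)) / (s * (a + b))^2"
  define c0 where "c0 = exp (- s * a) * (1 + s * a + s^2 * K * a^2)"
  define c1 where "c1 = exp (- s * a) * (s + 2 * s^2 * K * a)"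
  define c2 where "c2 = exp (- s * a) * (s^2 * K)"
  have a: "a \<ge> 0" using b v by (simp add: a_def)
  have K: "K \<ge> 0" unfolding K_def using a b s by (intro bennett_K_nonneg) simp
  have c2: "c2 \<ge> 0" using K by (simp add: c2_def)
  have X2m: "(\<lambda>x. (X x)^2) \<in> borel_measurable M" using Xm by measurable
  have fin: "(\<integral>\<^sup>+ x. ennreal (norm ((X x)^2)) \<partial>M) < \<infinity>"
    using V by (simp add: top.not_eq_extremum order.strict_trans1)
  have X2i: "integrable M (\<lambda>x. (X x)^2)" by (rule integrableI_bounded[OF X2m fin])
  have "(\<integral>\<^sup>+ x. ennreal ((X x)^2) \<partial>M) = ennreal (\<integral>x. (X x)^2 \<partial>M)"
    by (rule nn_integral_eq_integral[OF X2i]) auto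
  then have "ennreal (\<integral>x. (X x)^2 \<partial>M) \<le> ennreal v" using V by simp
  then have EX2: "(\<integral>x. (X x)^2 \<partial>M) \<le> v" using v by (simp add: ennreal_le_iff)
  have q: "AE x in M. exp (s * X x) \<le> c0 + c1 * X x + c2 * (X x)^2"
    using bd
  proof (rule AE_mp, intro AE_I2 impI)
    fix x assume "X x \<le> b"
    from bennett_quad[OF b v s this] show "exp (s * X x) \<le> c0 + c1 * X x + c2 * (X x)^2"
      unfolding c0_def c1_def c2_def a_def[symmetric] K_def[symmetric] by (simp add: algebra_simps)
  qed
  have qi: "integrable M (\<lambda>x. c0 + c1 * X x + c2 * (X x)^2)"
    using Xi X2i by auto
  have "(\<integral>\<^sup>+ x. ennreal (exp (s * X x)) \<partial>M) \<le> (\<integral>\<^sup>+ x. ennreal (c0 + c1 * X x + c2 * (X x)^2) \<partial>M)"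
    using q by (intro nn_integral_mono_AE) (auto elim!: eventually_mono intro: ennreal_leI)
  also have "\<dots> = ennreal (\<integral>x. c0 + c1 * X x + c2 * (X x)^2 \<partial>M)"
    using q by (intro nn_integral_eq_integral[OF qi]) (auto elim!: eventually_mono intro: order.trans[OF less_imp_le[OF exp_gt_zero]])
  also have "(\<integral>x. c0 + c1 * X x + c2 * (X x)^2 \<partial>M) = c0 + c1 * expectation X + c2 * (\<integral>x. (X x)^2 \<partial>M)"
    using Xi X2i by (simp add: prob_space)
  also have "\<dots> \<le> c0 + c2 * v" using E0 EX2 c2 by (simp add: mult_left_mono)
  also have "c0 + c2 * v = b\<^sup>2 / (b\<^sup>2 + v) * exp (- (v / b) * s) + v / (b\<^sup>2 + v) * exp (b * s)"
    using bennett_value[OF b v s] unfolding c0_def c2_def a_def[symmetric] K_def[symmetric]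
    by (simp add: algebra_simps)
  finally show ?thesis by (simp add: ennreal_leI)
qed



lemma key_identity:
  fixes b c v z :: real
  defines "T \<equiv> b^2 + v"
  defines "t \<equiv> c * T"
  shows "(z - b^2 * c)^2 * T^2 - b^2 * c^2 * (b^2 + v * z) * T^2 - (b^2 + v * z)^2
       = b^2 * v * z * (2 * z - t^2 - 2 * t - 2) + b^4 * (z^2 - 2 * t * z - 1)"
  unfolding t_def T_def by (simp add: eval_nat_numeral algebra_simps)

lemma key_ineq:
  fixes b c v :: real
  assumes b: "b > 0" and c: "c > 0" and v: "v \<ge> 0"
  defines "w \<equiv> exp (- c * v)" and "E \<equiv> exp (c * b^2)"
  defines "p \<equiv> b^2 * w + v * E"
  shows "(b^2 * c^2 * w * p - (E - b^2 * c * w)^2) * (b^2 + v)^2 + p^2 \<le> 0"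
proof -
  define T where "T = b^2 + v"
  define t where "t = c * T"
  define z where "z = exp t"
  have T: "T > 0" using b v by (simp add: T_def add_pos_nonneg)
  have t: "t \<ge> 0" using c T by (simp add: t_def)
  have Ez: "E = z * w"
  proof -
    have "z * w = exp (t + - c * v)" by (simp add: z_def w_def mult_exp_exp)
    also have "t + - c * v = c * b^2" by (simp add: t_def T_def algebra_simps)
    finally show ?thesis by (simp add: E_def)
  qed
  have p: "p = w * (b^2 + v * z)" by (simp add: p_def Ez algebra_simps)
  have N: "E - b^2 * c * w = w * (z - b^2 * c)" by (simp add: Ez algebra_simps)
  have z0: "z > 0" by (simp add: z_def)
  have f1: "2 * z - t^2 - 2 * t - 2 \<ge> 0" using exp_quad_lower[OF t] by (simp add: z_def)
  have f2: "z^2 - 2 * t * z - 1 \<ge> 0" using exp_sinh_lower[OF t] by (simp add: z_def power2_eq_square algebra_simps)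
  have Q: "0 \<le> (z - b^2 * c)^2 * T^2 - b^2 * c^2 * (b^2 + v * z) * T^2 - (b^2 + v * z)^2"
    unfolding key_identity[of z b c v, folded T_def, folded t_def]
    using f1 f2 v z0 b by (intro add_nonneg_nonneg mult_nonneg_nonneg) auto
  have "(b^2 * c^2 * w * p - (E - b^2 * c * w)^2) * (b^2 + v)^2 + p^2
      = - (w^2 * ((z - b^2 * c)^2 * T^2 - b^2 * c^2 * (b^2 + v * z) * T^2 - (b^2 + v * z)^2))"
    unfolding p N T_def by (simp add: power2_eq_square algebra_simps)
  also have "\<dots> \<le> 0" using Q by simp
  finally show ?thesis .
qed



definition fz :: "real \<Rightarrow> real \<Rightarrow> real \<Rightarrow> real" where
  "fz b s v = ln (b\<^sup>2 / (b\<^sup>2 + v) * exp (- (v / b) * s) + v / (b\<^sup>2 + v) * exp (b * s))"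

lemma g_concave:
  fixes b c :: real
  assumes b: "b > 0" and c: "c > 0"
  shows "concave_on {0..} (\<lambda>v. ln (b^2 * exp (- c * v) + v * exp (c * b^2)) - ln (b^2 + v))"
proof (rule f''_le0_imp_concave)
  show "convex {0::real..}" by simp
  define E where "E = exp (c * b^2)"
  have pp: "b^2 * exp (- c * v) + v * E > 0" if "v \<ge> 0" for v
    using b that by (intro add_pos_nonneg) (auto simp: E_def)
  have Tp: "b^2 + v > 0" if "v \<ge> 0" for v :: real using b that by (intro add_pos_nonneg) auto
  fix v :: real assume v: "v \<in> {0..}"
  then have v0: "v \<ge> 0" by simp
  show "((\<lambda>v. ln (b^2 * exp (- c * v) + v * exp (c * b^2)) - ln (b^2 + v)) has_real_derivative
     ((E - b^2 * c * exp (- c * v)) / (b^2 * exp (- c * v) + v * E) - 1 / (b^2 + v))) (at v)"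
    using pp[OF v0] Tp[OF v0] unfolding E_def[symmetric]
    by (auto intro!: derivative_eq_intros simp: algebra_simps)
  show "((\<lambda>v. (E - b^2 * c * exp (- c * v)) / (b^2 * exp (- c * v) + v * E) - 1 / (b^2 + v)) has_real_derivative
     ((b^2 * c^2 * exp (- c * v) * (b^2 * exp (- c * v) + v * E) - (E - b^2 * c * exp (- c * v))^2)
        / (b^2 * exp (- c * v) + v * E)^2 + 1 / (b^2 + v)^2)) (at v)"
    using pp[OF v0] Tp[OF v0]
    by (auto intro!: derivative_eq_intros simp: power2_eq_square field_simps)
  define w where "w = exp (- c * v)"
  define p where "p = b^2 * w + v * E"
  have p0: "p > 0" using pp[OF v0] by (simp add: p_def w_def)
  have T0: "b^2 + v > 0" using Tp[OF v0] .
  have K: "(b^2 * c^2 * w * p - (E - b^2 * c * w)^2) * (b^2 + v)^2 + p^2 \<le> 0"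
    using key_ineq[OF b c v0] unfolding w_def p_def E_def .
  have "(b^2 * c^2 * w * p - (E - b^2 * c * w)^2) / p^2 + 1 / (b^2 + v)^2
     = ((b^2 * c^2 * w * p - (E - b^2 * c * w)^2) * (b^2 + v)^2 + p^2) / (p^2 * (b^2 + v)^2)"
    using p0 T0 by (simp add: field_simps)
  also have "\<dots> \<le> 0" using K p0 T0 by (intro divide_nonpos_nonneg) auto
  finally show "(b^2 * c^2 * exp (- c * v) * (b^2 * exp (- c * v) + v * E) - (E - b^2 * c * exp (- c * v))^2)
        / (b^2 * exp (- c * v) + v * E)^2 + 1 / (b^2 + v)^2 \<le> 0"
    unfolding w_def p_def by (simp add: mult.assoc)
qed

lemma fz_eq:
  fixes b s v :: real
  assumes b: "b > 0" and s: "s > 0" and v: "v \<ge> 0"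
  shows "fz b s v = ln (b^2 * exp (- (s / b) * v) + v * exp ((s / b) * b^2)) - ln (b^2 + v)"
proof -
  have T: "b^2 + v > 0" using b v by (intro add_pos_nonneg) auto
  have N: "b^2 * exp (- (s / b) * v) + v * exp ((s / b) * b^2) > 0" using b v by (intro add_pos_nonneg) auto
  have e1: "- (v / b) * s = - (s / b) * v" by simp
  have e2: "(s / b) * b^2 = b * s" using b by (simp add: power2_eq_square)
  have "b\<^sup>2 / (b\<^sup>2 + v) * exp (- (v / b) * s) + v / (b\<^sup>2 + v) * exp (b * s)
     = (b^2 * exp (- (s / b) * v) + v * exp ((s / b) * b^2)) / (b^2 + v)"
    unfolding e1 e2 by (simp add: add_divide_distrib)
  then show ?thesis unfolding fz_def using ln_divide_pos[OF N T] by simp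
qed

lemma fz_concave:
  fixes b s x y t :: real
  assumes b: "b > 0" and s: "s > 0" and x: "x \<ge> 0" and y: "y \<ge> 0" and t: "0 \<le> t" "t \<le> 1"
  shows "(1 - t) * fz b s x + t * fz b s y \<le> fz b s ((1 - t) * x + t * y)"
proof -
  have c: "s / b > 0" using b s by simp
  have xy: "(1 - t) * x + t * y \<ge> 0" using x y t by simp
  have "(1 - t) * (\<lambda>v. ln (b^2 * exp (- (s/b) * v) + v * exp ((s/b) * b^2)) - ln (b^2 + v)) x
      + t * (\<lambda>v. ln (b^2 * exp (- (s/b) * v) + v * exp ((s/b) * b^2)) - ln (b^2 + v)) y
      \<le> (\<lambda>v. ln (b^2 * exp (- (s/b) * v) + v * exp ((s/b) * b^2)) - ln (b^2 + v)) ((1 - t) *\<^sub>R x + t *\<^sub>R y)"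
    using concave_onD[OF g_concave[OF b c] t] x y by simp
  then show ?thesis using fz_eq[OF b s x] fz_eq[OF b s y] fz_eq[OF b s xy] by simp
qed



lemma indep_nn_mult:
  fixes F H :: "'a \<Rightarrow> real"
  assumes P: "prob_space M" and ind: "prob_space.indep_var M borel F borel H"
    and F0: "\<And>\<omega>. F \<omega> \<ge> 0" and H0: "\<And>\<omega>. H \<omega> \<ge> 0"
  shows "(\<integral>\<^sup>+\<omega>. ennreal (F \<omega> * H \<omega>) \<partial>M) = (\<integral>\<^sup>+\<omega>. ennreal (F \<omega>) \<partial>M) * (\<integral>\<^sup>+\<omega>. ennreal (H \<omega>) \<partial>M)"
proof -
  interpret prob_space M by (rule P)
  have cb: "case_bool borel borel = (\<lambda>_::bool. (borel :: real measure))"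
    by (rule ext) (simp split: bool.split)
  have ind': "indep_var borel (ennreal \<circ> F) borel (ennreal \<circ> H)"
    by (rule indep_var_compose[OF ind]) measurable
  have cb: "case_bool borel borel = (\<lambda>_::bool. (borel :: ennreal measure))"
    by (rule ext) (simp split: bool.split)
  have iv: "indep_vars (\<lambda>_. borel) (case_bool (ennreal \<circ> F) (ennreal \<circ> H)) UNIV"
    using ind' unfolding indep_var_def cb .
  have "(\<integral>\<^sup>+\<omega>. (\<Prod>i\<in>UNIV. case_bool (ennreal \<circ> F) (ennreal \<circ> H) i \<omega>) \<partial>M) = (\<Prod>i\<in>UNIV. \<integral>\<^sup>+\<omega>. case_bool (ennreal \<circ> F) (ennreal \<circ> H) i \<omega> \<partial>M)"
    by (rule indep_vars_nn_integral[OF _ iv]) (auto split: bool.split)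
  then show ?thesis by (simp add: UNIV_bool mult.commute ennreal_mult F0 H0 comp_def)
qed

lemma ville:
  fixes M :: "'a measure" and X :: "nat \<Rightarrow> 'a \<Rightarrow> real" and V :: "nat \<Rightarrow> real" and \<zeta> a :: real
  assumes P: "prob_space M"
    and Xm: "\<And>i. i \<ge> 1 \<Longrightarrow> X i \<in> borel_measurable M"
    and ind: "prob_space.indep_vars M (\<lambda>_. borel) X {1..}"
    and V0: "V 0 = 0"
    and step: "\<And>k. (\<integral>\<^sup>+\<omega>. ennreal (exp (\<zeta> * X (Suc k) \<omega>)) \<partial>M) \<le> ennreal (exp (V (Suc k) - V k))"
    and a: "a > 0"
  shows "measure M {\<omega> \<in> space M. \<exists>n. a \<le> exp (\<zeta> * (\<Sum>i=1..Suc n. X i \<omega>) - V (Suc n))} \<le> 1 / a"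
proof -
  interpret prob_space M by (rule P)
  define Y where "Y n \<omega> = exp (\<zeta> * (\<Sum>i=1..n. X i \<omega>) - V n)" for n \<omega>
  define Bp where "Bp n \<omega> = (\<forall>j\<in>{1..n}. Y j \<omega> < a)" for n \<omega>
  define G where "G n \<omega> = Y n \<omega> * (if Bp n \<omega> then 1 else 0)" for n \<omega>
  define H where "H n \<omega> = Y (Suc n) \<omega> * (if Bp n \<omega> \<and> a \<le> Y (Suc n) \<omega> then 1 else 0)" for n \<omega>
  define A where "A n = {\<omega> \<in> space M. Bp n \<omega> \<and> a \<le> Y (Suc n) \<omega>}" for n
  have Ym[measurable]: "Y n \<in> borel_measurable M" for n
  proof -
    have "(\<lambda>\<omega>. \<Sum>i\<in>{1..n}. X i \<omega>) \<in> borel_measurable M"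
      by (rule borel_measurable_sum) (auto intro: Xm)
    then show ?thesis unfolding Y_def by measurable
  qed
  have Bm[measurable]: "Measurable.pred M (Bp n)" for n
    unfolding Bp_def by measurable
  have Gm[measurable]: "G n \<in> borel_measurable M" for n unfolding G_def by measurable
  have Hm[measurable]: "H n \<in> borel_measurable M" for n unfolding H_def by measurable
  have Am[measurable]: "A n \<in> sets M" for n unfolding A_def by measurable
  have Y0: "Y 0 \<omega> = 1" for \<omega> by (simp add: Y_def V0)
  have Ypos: "Y n \<omega> > 0" for n \<omega> by (simp add: Y_def)
  have YS: "Y (Suc k) \<omega> = Y k \<omega> * exp (\<zeta> * X (Suc k) \<omega>) * exp (- (V (Suc k) - V k))" for k \<omega>
  proof -
    have "Y (Suc k) \<omega> = exp ((\<zeta> * (\<Sum>i=1..k. X i \<omega>) - V k) + \<zeta> * X (Suc k) \<omega> + (- (V (Suc k) - V k)))"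
      by (simp add: Y_def algebra_simps)
    then show ?thesis by (simp only: exp_add Y_def)
  qed
  have keystep: "(\<integral>\<^sup>+\<omega>. ennreal (Y (Suc k) \<omega> * (if Bp k \<omega> then 1 else 0)) \<partial>M) \<le> (\<integral>\<^sup>+\<omega>. ennreal (G k \<omega>) \<partial>M)" for k
  proof -
    define R1 where "R1 \<omega> = restrict (\<lambda>i. X i \<omega>) {1..k}" for \<omega>
    define R2 where "R2 \<omega> = restrict (\<lambda>i. X i \<omega>) {Suc k}" for \<omega>
    define N1 where "N1 = PiM {1..k} (\<lambda>_::nat. (borel :: real measure))"
    define N2 where "N2 = PiM {Suc k} (\<lambda>_::nat. (borel :: real measure))"
    define \<phi>1 where "\<phi>1 x = exp (\<zeta> * (\<Sum>i=1..k. x i) - V k) *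
       (if (\<forall>j\<in>{1..k}. exp (\<zeta> * (\<Sum>i=1..j. x i) - V j) < a) then 1 else 0)" for x :: "nat \<Rightarrow> real"
    define \<phi>2 where "\<phi>2 x = exp (\<zeta> * x (Suc k))" for x :: "nat \<Rightarrow> real"
    have iv: "indep_var N1 R1 N2 R2"
      unfolding N1_def N2_def R1_def R2_def by (rule indep_var_restrict[OF ind]) auto
    have sm: "(\<lambda>x. \<Sum>i=1..j. x i) \<in> borel_measurable N1" if "j \<le> k" for j
      unfolding N1_def using that by (intro borel_measurable_sum measurable_component_singleton) auto
    have \<phi>1m: "\<phi>1 \<in> borel_measurable N1"
    proof -
      have [measurable]: "(\<lambda>x. \<Sum>i=1..k. x i) \<in> borel_measurable N1" by (rule sm) simp
      have "Measurable.pred N1 (\<lambda>x. \<forall>j\<in>{1..k}. exp (\<zeta> * (\<Sum>i=1..j. x i) - V j) < a)"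
      proof (rule pred_intros_finite(3))
        fix j assume "j \<in> {1..k}"
        then have [measurable]: "(\<lambda>x. \<Sum>i=1..j. x i) \<in> borel_measurable N1" by (intro sm) simp
        show "Measurable.pred N1 (\<lambda>x. exp (\<zeta> * (\<Sum>i=1..j. x i) - V j) < a)" by measurable
      qed simp
      then show ?thesis unfolding \<phi>1_def by measurable
    qed
    have [measurable]: "(\<lambda>x. x (Suc k)) \<in> borel_measurable N2"
      unfolding N2_def by (rule measurable_component_singleton) simp
    have \<phi>2m: "\<phi>2 \<in> borel_measurable N2"
      unfolding \<phi>2_def by measurable
    have iv2: "indep_var borel (\<phi>1 \<circ> R1) borel (\<phi>2 \<circ> R2)"
      by (rule indep_var_compose[OF iv \<phi>1m \<phi>2m])
    have e1: "(\<phi>1 \<circ> R1) \<omega> = G k \<omega>" for \<omega>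
    proof -
      have s: "(\<Sum>i=1..j. R1 \<omega> i) = (\<Sum>i=1..j. X i \<omega>)" if "j \<le> k" for j
        using that by (intro sum.cong) (auto simp: R1_def)
      show ?thesis using s by (auto simp: \<phi>1_def G_def Bp_def Y_def)
    qed
    have e2: "(\<phi>2 \<circ> R2) \<omega> = exp (\<zeta> * X (Suc k) \<omega>)" for \<omega> by (simp add: \<phi>2_def R2_def)
    have prod: "(\<integral>\<^sup>+\<omega>. ennreal (G k \<omega> * exp (\<zeta> * X (Suc k) \<omega>)) \<partial>M)
       = (\<integral>\<^sup>+\<omega>. ennreal (G k \<omega>) \<partial>M) * (\<integral>\<^sup>+\<omega>. ennreal (exp (\<zeta> * X (Suc k) \<omega>)) \<partial>M)"
    proof -
      have F0: "0 \<le> (\<phi>1 \<circ> R1) \<omega>" for \<omega> unfolding e1 G_def using Ypos[of k \<omega>] by simp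
      have H0: "0 \<le> (\<phi>2 \<circ> R2) \<omega>" for \<omega> unfolding e2 by simp
      show ?thesis using indep_nn_mult[OF P iv2 F0 H0] unfolding e1 e2 .
    qed
    have "(\<integral>\<^sup>+\<omega>. ennreal (Y (Suc k) \<omega> * (if Bp k \<omega> then 1 else 0)) \<partial>M)
        = (\<integral>\<^sup>+\<omega>. ennreal (G k \<omega> * exp (\<zeta> * X (Suc k) \<omega>)) * ennreal (exp (- (V (Suc k) - V k))) \<partial>M)"
      by (intro nn_integral_cong) (simp add: YS G_def ennreal_mult[symmetric] less_imp_le[OF Ypos])
    also have "\<dots> = (\<integral>\<^sup>+\<omega>. ennreal (G k \<omega> * exp (\<zeta> * X (Suc k) \<omega>)) \<partial>M) * ennreal (exp (- (V (Suc k) - V k)))"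
    proof (rule nn_integral_multc)
      have [measurable]: "X (Suc k) \<in> borel_measurable M" by (rule Xm) simp
      show "(\<lambda>\<omega>. ennreal (G k \<omega> * exp (\<zeta> * X (Suc k) \<omega>))) \<in> borel_measurable M" by measurable
    qed
    also have "\<dots> \<le> (\<integral>\<^sup>+\<omega>. ennreal (G k \<omega>) \<partial>M) * ennreal (exp (V (Suc k) - V k)) * ennreal (exp (- (V (Suc k) - V k)))"
      unfolding prod by (intro mult_right_mono mult_left_mono step) auto
    also have "\<dots> = (\<integral>\<^sup>+\<omega>. ennreal (G k \<omega>) \<partial>M)"
      by (simp add: mult.assoc ennreal_mult[symmetric] exp_minus[symmetric] mult_exp_exp)
    finally show ?thesis .
  qed
  have induct: "(\<Sum>n<N. \<integral>\<^sup>+\<omega>. ennreal (H n \<omega>) \<partial>M) + (\<integral>\<^sup>+\<omega>. ennreal (G N \<omega>) \<partial>M) \<le> 1" for N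
  proof (induction N)
    case 0
    have "(\<integral>\<^sup>+\<omega>. ennreal (G 0 \<omega>) \<partial>M) = (\<integral>\<^sup>+\<omega>. 1 \<partial>M)"
      by (intro nn_integral_cong) (simp add: G_def Bp_def Y0)
    then show ?case by (simp add: emeasure_space_1)
  next
    case (Suc N)
    have pw: "ennreal (H N \<omega>) + ennreal (G (Suc N) \<omega>) = ennreal (Y (Suc N) \<omega> * (if Bp N \<omega> then 1 else 0))" for \<omega>
    proof -
      have "Bp (Suc N) \<omega> = (Bp N \<omega> \<and> Y (Suc N) \<omega> < a)"
        unfolding Bp_def by (auto simp: le_Suc_eq)
      then show ?thesis using Ypos[of "Suc N" \<omega>] by (auto simp: H_def G_def)
    qed
    have "(\<integral>\<^sup>+\<omega>. ennreal (H N \<omega>) \<partial>M) + (\<integral>\<^sup>+\<omega>. ennreal (G (Suc N) \<omega>) \<partial>M)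
        = (\<integral>\<^sup>+\<omega>. ennreal (H N \<omega>) + ennreal (G (Suc N) \<omega>) \<partial>M)"
      by (rule nn_integral_add[symmetric]) measurable
    also have "\<dots> = (\<integral>\<^sup>+\<omega>. ennreal (Y (Suc N) \<omega> * (if Bp N \<omega> then 1 else 0)) \<partial>M)"
      unfolding pw ..
    also have "\<dots> \<le> (\<integral>\<^sup>+\<omega>. ennreal (G N \<omega>) \<partial>M)" by (rule keystep)
    finally have "(\<integral>\<^sup>+\<omega>. ennreal (H N \<omega>) \<partial>M) + (\<integral>\<^sup>+\<omega>. ennreal (G (Suc N) \<omega>) \<partial>M) \<le> (\<integral>\<^sup>+\<omega>. ennreal (G N \<omega>) \<partial>M)" .
    then have "(\<Sum>n<Suc N. \<integral>\<^sup>+\<omega>. ennreal (H n \<omega>) \<partial>M) + (\<integral>\<^sup>+\<omega>. ennreal (G (Suc N) \<omega>) \<partial>M)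
       \<le> (\<Sum>n<N. \<integral>\<^sup>+\<omega>. ennreal (H n \<omega>) \<partial>M) + (\<integral>\<^sup>+\<omega>. ennreal (G N \<omega>) \<partial>M)"
      by (simp add: add.assoc add_left_mono)
    then show ?case using Suc.IH by (rule order_trans)
  qed
  have sum1: "(\<Sum>n. \<integral>\<^sup>+\<omega>. ennreal (H n \<omega>) \<partial>M) \<le> 1"
  proof (rule suminf_le_const)
    show "summable (\<lambda>n. \<integral>\<^sup>+\<omega>. ennreal (H n \<omega>) \<partial>M)" by (rule summableI)
    fix N show "(\<Sum>n<N. \<integral>\<^sup>+\<omega>. ennreal (H n \<omega>) \<partial>M) \<le> 1"
      using induct[of N] by (rule order_trans[rotated]) (simp add: add_increasing2)
  qed
  have Abound: "ennreal a * emeasure M (A n) \<le> (\<integral>\<^sup>+\<omega>. ennreal (H n \<omega>) \<partial>M)" for n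
  proof -
    have "ennreal a * emeasure M (A n) = (\<integral>\<^sup>+\<omega>. ennreal a * indicator (A n) \<omega> \<partial>M)"
      by (rule nn_integral_cmult_indicator[symmetric]) simp
    also have "\<dots> \<le> (\<integral>\<^sup>+\<omega>. ennreal (H n \<omega>) \<partial>M)"
      by (intro nn_integral_mono) (auto simp: indicator_def A_def H_def intro: ennreal_leI)
    finally show ?thesis .
  qed
  have disj: "disjoint_family A"
  unfolding disjoint_family_on_def
  proof (intro ballI impI)
    have *: "A m \<inter> A n = {}" if "m < n" for m n
    proof (rule ccontr)
      assume "A m \<inter> A n \<noteq> {}"
      then obtain x where "a \<le> Y (Suc m) x" "\<forall>j\<in>{1..n}. Y j x < a" by (auto simp: A_def Bp_def)
      moreover have "Suc m \<in> {1..n}" using that by simp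
      ultimately show False by fastforce
    qed
    fix m n :: nat assume "m \<in> UNIV" "n \<in> UNIV" "m \<noteq> n"
    then show "A m \<inter> A n = {}" using *[of m n] *[of n m] by (cases "m < n") auto
  qed
  have U: "{\<omega> \<in> space M. \<exists>n. a \<le> exp (\<zeta> * (\<Sum>i=1..Suc n. X i \<omega>) - V (Suc n))} = (\<Union>n. A n)"
  proof (intro equalityI subsetI)
    fix \<omega> assume "\<omega> \<in> {\<omega> \<in> space M. \<exists>n. a \<le> exp (\<zeta> * (\<Sum>i=1..Suc n. X i \<omega>) - V (Suc n))}"
    then have \<omega>: "\<omega> \<in> space M" and ex: "\<exists>n. a \<le> Y (Suc n) \<omega>" by (auto simp: Y_def)
    define n0 where "n0 = (LEAST n. a \<le> Y (Suc n) \<omega>)"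
    have h: "a \<le> Y (Suc n0) \<omega>" unfolding n0_def using ex by (rule LeastI_ex)
    have "Bp n0 \<omega>" unfolding Bp_def
    proof
      fix j assume j: "j \<in> {1..n0}"
      then obtain j' where j': "j = Suc j'" "j' < n0" by (cases j) auto
      then have "\<not> a \<le> Y (Suc j') \<omega>" unfolding n0_def using not_less_Least by blast
      then show "Y j \<omega> < a" using j' by simp
    qed
    then show "\<omega> \<in> (\<Union>n. A n)" using h \<omega> by (auto simp: A_def)
  qed (auto simp: A_def Y_def)
  have "ennreal a * emeasure M (\<Union>n. A n) = ennreal a * (\<Sum>n. emeasure M (A n))"
  proof -
    have "range A \<subseteq> sets M" using Am by auto
    then show ?thesis using suminf_emeasure[of A M] disj by simp
  qed
  also have "\<dots> = (\<Sum>n. ennreal a * emeasure M (A n))" by simp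
  also have "\<dots> \<le> (\<Sum>n. \<integral>\<^sup>+\<omega>. ennreal (H n \<omega>) \<partial>M)" by (intro suminf_le summableI Abound)
  also have "\<dots> \<le> 1" by (rule sum1)
  finally have "ennreal (a * measure M (\<Union>n. A n)) \<le> 1"
    by (simp add: emeasure_eq_measure ennreal_mult a less_imp_le)
  then have "a * measure M (\<Union>n. A n) \<le> 1" by (simp add: ennreal_le_1)
  then show ?thesis unfolding U using a by (simp add: field_simps mult.commute)
qed



lemma VV_fz: "VV b \<sigma> s n = real n * fz b s (nu \<sigma> n)"
  by (simp add: VV_def fz_def)

lemma nu_nonneg: "nu \<sigma> n \<ge> 0"
  unfolding nu_def by (intro divide_nonneg_nonneg sum_nonneg) auto

lemma VV_step:
  fixes b s :: real
  assumes b: "b > 0" and s: "s > 0"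
  shows "fz b s ((\<sigma> (Suc k))\<^sup>2) \<le> VV b \<sigma> s (Suc k) - VV b \<sigma> s k"
proof -
  define Sk where "Sk = (\<Sum>i=1..k. (\<sigma> i)\<^sup>2)"
  define w where "w = (\<sigma> (Suc k))\<^sup>2"
  define t :: real where "t = 1 / (real k + 1)"
  have t: "0 \<le> t" "t \<le> 1" by (auto simp: t_def)
  have nuS: "nu \<sigma> (Suc k) = (Sk + w) / (real k + 1)"
    by (simp add: nu_def Sk_def w_def add.commute)
  have nuk: "nu \<sigma> k = Sk / real k" by (simp add: nu_def Sk_def)
  have comb: "nu \<sigma> (Suc k) = (1 - t) * nu \<sigma> k + t * w"
  proof (cases "k = 0")
    case True
    then show ?thesis unfolding nuS nuk t_def Sk_def by simp
  next
    case False
    have h1: "(1 - 1 / (real k + 1)) * (Sk / real k) = Sk / (real k + 1)"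
      using False by (simp add: field_simps)
    show ?thesis unfolding nuS nuk t_def h1 by (simp add: add_divide_distrib)
  qed
  have w0: "w \<ge> 0" by (simp add: w_def)
  have c: "(1 - t) * fz b s (nu \<sigma> k) + t * fz b s w \<le> fz b s (nu \<sigma> (Suc k))"
    unfolding comb by (rule fz_concave[OF b s nu_nonneg w0 t])
  have k1: "(real k + 1) * t = 1" "(real k + 1) * (1 - t) = real k" by (simp_all add: t_def field_simps)
  have "(real k + 1) * ((1 - t) * fz b s (nu \<sigma> k) + t * fz b s w)
      = ((real k + 1) * (1 - t)) * fz b s (nu \<sigma> k) + ((real k + 1) * t) * fz b s w"
    by (simp add: algebra_simps)
  then have "(real k + 1) * ((1 - t) * fz b s (nu \<sigma> k) + t * fz b s w) = real k * fz b s (nu \<sigma> k) + fz b s w"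
    unfolding k1 by simp
  then have "real k * fz b s (nu \<sigma> k) + fz b s w \<le> (real k + 1) * fz b s (nu \<sigma> (Suc k))"
    using mult_left_mono[OF c, of "real k + 1"] by simp
  then show ?thesis unfolding VV_fz w_def by (simp add: algebra_simps)
qed

lemma closed_form:
  fixes b \<nu> \<epsilon> :: real and m :: nat
  assumes b: "b > 0" and \<nu>: "\<nu> > 0" and e: "0 < \<epsilon>" "\<epsilon> < b"
  defines "\<zeta> \<equiv> b / (b\<^sup>2 + \<nu>) * ln ((1 + \<epsilon> * b / \<nu>) / (1 - \<epsilon> / b))"
  shows "\<zeta> > 0"
    and "exp (- (\<zeta> * real m * \<epsilon> - real m * fz b \<zeta> \<nu>)) =
     ((1 + b * \<epsilon> / \<nu>) powr (- (\<nu> + b * \<epsilon>) / (b\<^sup>2 + \<nu>))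
         * (1 - \<epsilon> / b) powr (- (b\<^sup>2 - b * \<epsilon>) / (b\<^sup>2 + \<nu>))) ^ m"
proof -
  define \<alpha> where "\<alpha> = 1 + \<epsilon> * b / \<nu>"
  define \<beta> where "\<beta> = 1 - \<epsilon> / b"
  define L where "L = ln (\<alpha> / \<beta>)"
  define T where "T = b\<^sup>2 + \<nu>"
  have T: "T > 0" using b \<nu> by (simp add: T_def add_pos_pos)
  have \<alpha>: "\<alpha> > 1" using b \<nu> e by (simp add: \<alpha>_def)
  have \<beta>: "\<beta> > 0" "\<beta> < 1" using b e by (auto simp: \<beta>_def)
  have ab: "\<alpha> / \<beta> > 1" using \<alpha> \<beta> by (simp add: less_divide_eq)
  have L: "L > 0" using ab by (simp add: L_def)
  have L2: "L = ln \<alpha> - ln \<beta>" unfolding L_def using \<alpha> \<beta> by (intro ln_divide_pos) auto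
  have z: "\<zeta> = b / T * L" by (simp add: \<zeta>_def T_def L_def \<alpha>_def \<beta>_def)
  show zpos: "\<zeta> > 0" using z b T L by simp
  have e1: "exp (b * \<zeta>) = (\<alpha> / \<beta>) * exp (- (\<nu> / b) * \<zeta>)"
  proof -
    have "b * \<zeta> = L + (- (\<nu> / b) * \<zeta>)" using b T unfolding z by (simp add: T_def field_simps power2_eq_square)
    then have "exp (b * \<zeta>) = exp (L + (- (\<nu> / b) * \<zeta>))" by (rule arg_cong)
    also have "\<dots> = exp L * exp (- (\<nu> / b) * \<zeta>)" by (rule exp_add)
    finally have "exp (b * \<zeta>) = exp L * exp (- (\<nu> / b) * \<zeta>)" .
    then show ?thesis using ab by (simp add: L_def)
  qed
  have e2: "b\<^sup>2 + \<nu> * (\<alpha> / \<beta>) = T / \<beta>"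
    using b e \<nu> unfolding \<alpha>_def \<beta>_def T_def by (simp add: field_simps power2_eq_square)
  have Q: "b\<^sup>2 / (b\<^sup>2 + \<nu>) * exp (- (\<nu> / b) * \<zeta>) + \<nu> / (b\<^sup>2 + \<nu>) * exp (b * \<zeta>)
      = exp (- (\<nu> / b) * \<zeta>) / \<beta>"
  proof -
    have "b\<^sup>2 / (b\<^sup>2 + \<nu>) * exp (- (\<nu> / b) * \<zeta>) + \<nu> / (b\<^sup>2 + \<nu>) * exp (b * \<zeta>)
       = exp (- (\<nu> / b) * \<zeta>) * ((b\<^sup>2 + \<nu> * (\<alpha> / \<beta>)) / T)"
      unfolding e1 T_def by (simp add: add_divide_distrib algebra_simps)
    also have "\<dots> = exp (- (\<nu> / b) * \<zeta>) / \<beta>" unfolding e2 using T \<beta> by simp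
    finally show ?thesis .
  qed
  have fzv: "fz b \<zeta> \<nu> = - (\<nu> / b) * \<zeta> - ln \<beta>"
    unfolding fz_def Q using \<beta> by (simp add: ln_div)
  have th: "- (\<zeta> * real m * \<epsilon> - real m * fz b \<zeta> \<nu>)
     = real m * (- (\<nu> + b * \<epsilon>) / T * ln \<alpha> + (- (b\<^sup>2 - b * \<epsilon>) / T) * ln \<beta>)"
  proof -
    have "- (\<zeta> * real m * \<epsilon> - real m * fz b \<zeta> \<nu>) = real m * (- \<zeta> * (\<nu> + b * \<epsilon>) / b - ln \<beta>)"
      unfolding fzv using b by (simp add: field_simps)
    also have "- \<zeta> * (\<nu> + b * \<epsilon>) / b - ln \<beta> = - (\<nu> + b * \<epsilon>) / T * ln \<alpha> + (- (b\<^sup>2 - b * \<epsilon>) / T) * ln \<beta>"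
    proof -
      have s1: "- \<zeta> * (\<nu> + b * \<epsilon>) / b = - (\<nu> + b * \<epsilon>) / T * (ln \<alpha> - ln \<beta>)"
        unfolding z L2 using b T by (simp add: field_simps)
      have hT: "b\<^sup>2 = T - \<nu>" by (simp add: T_def)
      show ?thesis unfolding s1 hT using T by (simp add: field_simps)
    qed
    finally show ?thesis .
  qed
  have "((1 + b * \<epsilon> / \<nu>) powr (- (\<nu> + b * \<epsilon>) / (b\<^sup>2 + \<nu>)) * (1 - \<epsilon> / b) powr (- (b\<^sup>2 - b * \<epsilon>) / (b\<^sup>2 + \<nu>)))
      = exp (- (\<nu> + b * \<epsilon>) / T * ln \<alpha> + (- (b\<^sup>2 - b * \<epsilon>) / T) * ln \<beta>)"
  proof -
    have "1 + b * \<epsilon> / \<nu> = \<alpha>" by (simp add: \<alpha>_def mult.commute)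
    then show ?thesis using \<alpha> \<beta> by (simp add: powr_def \<beta>_def[symmetric] T_def[symmetric] exp_add)
  qed
  then show "exp (- (\<zeta> * real m * \<epsilon> - real m * fz b \<zeta> \<nu>)) =
     ((1 + b * \<epsilon> / \<nu>) powr (- (\<nu> + b * \<epsilon>) / (b\<^sup>2 + \<nu>))
         * (1 - \<epsilon> / b) powr (- (b\<^sup>2 - b * \<epsilon>) / (b\<^sup>2 + \<nu>))) ^ m"
    unfolding th by (simp add: exp_of_nat_mult)
qed



theorem theorem16:
  fixes M :: "'a measure" and X :: "nat \<Rightarrow> 'a \<Rightarrow> real"
    and \<sigma> :: "nat \<Rightarrow> real" and b \<epsilon> :: real and m :: nat
  assumes "prob_space M"
    and "b > 0"
    and "\<And>i. i \<ge> 1 \<Longrightarrow> X i \<in> borel_measurable M"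
    and "prob_space.indep_vars M (\<lambda>_. borel) X {1..}"
    and "\<And>i. i \<ge> 1 \<Longrightarrow> integrable M (X i)"
    and "\<And>i. i \<ge> 1 \<Longrightarrow> prob_space.expectation M (X i) = 0"
    and "\<And>i. i \<ge> 1 \<Longrightarrow> (\<integral>\<^sup>+ x. ennreal (\<bar>X i x\<bar>\<^sup>2) \<partial>M) \<le> ennreal ((\<sigma> i)\<^sup>2)"
    and "\<And>i. i \<ge> 1 \<Longrightarrow> AE x in M. X i x \<le> b"
    and "m \<ge> 1"
    and "nu \<sigma> m > 0"
    and "0 < \<epsilon>" and "\<epsilon> < b"
  shows "let \<zeta> = b / (b\<^sup>2 + nu \<sigma> m) * ln ((1 + \<epsilon> * b / nu \<sigma> m) / (1 - \<epsilon> / b)) in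
     measure M {x \<in> space M.
        (SUP n\<in>{1..}. ereal (\<zeta> * ((\<Sum>i=1..n. X i x) - real m * \<epsilon>) - VV b \<sigma> \<zeta> n + VV b \<sigma> \<zeta> m)) \<ge> 0}
     \<le> ((1 + b * \<epsilon> / nu \<sigma> m) powr (- (nu \<sigma> m + b * \<epsilon>) / (b\<^sup>2 + nu \<sigma> m))
         * (1 - \<epsilon> / b) powr (- (b\<^sup>2 - b * \<epsilon>) / (b\<^sup>2 + nu \<sigma> m))) ^ m"
proof -
  note P = assms(1) and b = assms(2) and Xm = assms(3) and ind = assms(4) and Xi = assms(5)
    and E0 = assms(6) and Var = assms(7) and bd = assms(8) and \<nu>pos = assms(10) and e = assms(11,12)
  interpret prob_space M by (rule P)
  define \<zeta> where "\<zeta> = b / (b\<^sup>2 + nu \<sigma> m) * ln ((1 + \<epsilon> * b / nu \<sigma> m) / (1 - \<epsilon> / b))"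
  have zpos: "\<zeta> > 0" unfolding \<zeta>_def by (rule closed_form(1)[OF b \<nu>pos e])
  have cf: "exp (- (\<zeta> * real m * \<epsilon> - real m * fz b \<zeta> (nu \<sigma> m))) =
     ((1 + b * \<epsilon> / nu \<sigma> m) powr (- (nu \<sigma> m + b * \<epsilon>) / (b\<^sup>2 + nu \<sigma> m))
         * (1 - \<epsilon> / b) powr (- (b\<^sup>2 - b * \<epsilon>) / (b\<^sup>2 + nu \<sigma> m))) ^ m"
    unfolding \<zeta>_def by (rule closed_form(2)[OF b \<nu>pos e])
  define \<theta> where "\<theta> = \<zeta> * real m * \<epsilon> - VV b \<sigma> \<zeta> m"
  have \<theta>: "\<theta> = \<zeta> * real m * \<epsilon> - real m * fz b \<zeta> (nu \<sigma> m)" by (simp add: \<theta>_def VV_fz)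
  have step: "(\<integral>\<^sup>+\<omega>. ennreal (exp (\<zeta> * X (Suc k) \<omega>)) \<partial>M) \<le> ennreal (exp (VV b \<sigma> \<zeta> (Suc k) - VV b \<sigma> \<zeta> k))" for k
  proof -
    define v where "v = (\<sigma> (Suc k))\<^sup>2"
    have v0: "v \<ge> 0" by (simp add: v_def)
    define Q where "Q = b\<^sup>2 / (b\<^sup>2 + v) * exp (- (v / b) * \<zeta>) + v / (b\<^sup>2 + v) * exp (b * \<zeta>)"
    have Qpos: "Q > 0" unfolding Q_def using b v0
      by (intro add_pos_nonneg mult_pos_pos divide_pos_pos) (auto intro: add_pos_nonneg)
    have "(\<integral>\<^sup>+\<omega>. ennreal (exp (\<zeta> * X (Suc k) \<omega>)) \<partial>M) \<le> ennreal Q"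
      unfolding Q_def v_def
      by (rule mgf_bound[OF P b zpos _ Xm Xi E0 Var bd]) simp_all
    also have "Q = exp (fz b \<zeta> v)" using Qpos by (simp add: fz_def Q_def)
    also have "ennreal (exp (fz b \<zeta> v)) \<le> ennreal (exp (VV b \<sigma> \<zeta> (Suc k) - VV b \<sigma> \<zeta> k))"
      using VV_step[OF b zpos, of \<sigma> k] unfolding v_def by (intro ennreal_leI) simp
    finally show ?thesis .
  qed
  have V0: "VV b \<sigma> \<zeta> 0 = 0" by (simp add: VV_def)
  have vil: "measure M {\<omega> \<in> space M. \<exists>n. a \<le> exp (\<zeta> * (\<Sum>i=1..Suc n. X i \<omega>) - VV b \<sigma> \<zeta> (Suc n))} \<le> 1 / a"
    if "a > 0" for a
    by (rule ville[OF P Xm ind V0 step that])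
  have sm[measurable]: "(\<lambda>\<omega>. \<Sum>i=1..n. X i \<omega>) \<in> borel_measurable M" for n
    by (rule borel_measurable_sum) (auto intro: Xm)
  define Ev where "Ev = {x \<in> space M.
        (SUP n\<in>{1..}. ereal (\<zeta> * ((\<Sum>i=1..n. X i x) - real m * \<epsilon>) - VV b \<sigma> \<zeta> n + VV b \<sigma> \<zeta> m)) \<ge> 0}"
  have main: "measure M Ev \<le> exp (- \<theta>)"
  proof (rule field_le_epsilon)
    fix e :: real assume epos: "0 < e"
    define \<delta> where "\<delta> = ln (1 + e * exp \<theta>)"
    have "1 < 1 + e * exp \<theta>" using epos by simp
    then have \<delta>: "\<delta> > 0" unfolding \<delta>_def by simp
    define c where "c = exp (\<theta> - \<delta>)"
    have c: "c > 0" by (simp add: c_def)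
    define Big where "Big = {\<omega> \<in> space M. \<exists>n. c \<le> exp (\<zeta> * (\<Sum>i=1..Suc n. X i \<omega>) - VV b \<sigma> \<zeta> (Suc n))}"
    have Bigm: "Big \<in> sets M" unfolding Big_def by measurable
    have sub: "Ev \<subseteq> Big"
    proof
      fix x assume "x \<in> Ev"
      then have x: "x \<in> space M" and sup: "0 \<le> (SUP n\<in>{1..}. ereal (\<zeta> * ((\<Sum>i=1..n. X i x) - real m * \<epsilon>) - VV b \<sigma> \<zeta> n + VV b \<sigma> \<zeta> m))"
        by (auto simp: Ev_def)
      have "\<exists>n\<in>{1..}. - \<delta> < \<zeta> * ((\<Sum>i=1..n. X i x) - real m * \<epsilon>) - VV b \<sigma> \<zeta> n + VV b \<sigma> \<zeta> m"
      proof (rule ccontr)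
        assume "\<not> ?thesis"
        then have "(SUP n\<in>{1..}. ereal (\<zeta> * ((\<Sum>i=1..n. X i x) - real m * \<epsilon>) - VV b \<sigma> \<zeta> n + VV b \<sigma> \<zeta> m)) \<le> ereal (- \<delta>)"
          by (intro SUP_least) (auto simp: not_less)
        then have "0 \<le> ereal (- \<delta>)" using sup by (rule order.trans[rotated])
        then show False using \<delta> by simp
      qed
      then obtain n where n: "n \<ge> 1" and g: "- \<delta> < \<zeta> * ((\<Sum>i=1..n. X i x) - real m * \<epsilon>) - VV b \<sigma> \<zeta> n + VV b \<sigma> \<zeta> m"
        by auto
      obtain n' where n': "n = Suc n'" using n by (cases n) auto
      have "\<theta> - \<delta> < \<zeta> * (\<Sum>i=1..n. X i x) - VV b \<sigma> \<zeta> n"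
        using g unfolding \<theta>_def by (simp add: algebra_simps)
      then have "c \<le> exp (\<zeta> * (\<Sum>i=1..Suc n'. X i x) - VV b \<sigma> \<zeta> (Suc n'))"
        unfolding c_def n' by simp
      then show "x \<in> Big" using x by (auto simp: Big_def)
    qed
    have "measure M Ev \<le> measure M Big" by (rule finite_measure_mono[OF sub Bigm])
    also have "\<dots> \<le> 1 / c" unfolding Big_def by (rule vil[OF c])
    also have "1 / c = exp \<delta> * exp (- \<theta>)"
    proof -
      have "c * (exp \<delta> * exp (- \<theta>)) = exp ((\<theta> - \<delta>) + \<delta> + - \<theta>)"
        unfolding c_def exp_add by (simp only: mult.assoc)
      also have "(\<theta> - \<delta>) + \<delta> + - \<theta> = 0" by simp
      finally have "c * (exp \<delta> * exp (- \<theta>)) = 1" by simp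
      then show ?thesis using c by (simp add: field_simps)
    qed
    also have "exp \<delta> = 1 + e * exp \<theta>" unfolding \<delta>_def using epos by (simp add: add_pos_nonneg)
    also have "(1 + e * exp \<theta>) * exp (- \<theta>) = exp (- \<theta>) + e * (exp \<theta> * exp (- \<theta>))"
      by (simp add: algebra_simps)
    also have "exp \<theta> * exp (- \<theta>) = 1" by (simp add: mult_exp_exp)
    finally show "measure M Ev \<le> exp (- \<theta>) + e" by simp
  qed
  show ?thesis
    unfolding Let_def \<zeta>_def[symmetric] Ev_def[symmetric] cf[symmetric] \<theta>[symmetric] by (rule main)
qed


end
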